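(* Let $\Delta$ be an ordinary subgraph of $T$ and let $\varepsilon$ be the minimal integer direction vector of an edge (one-dimensional face) of the cone $C_\Delta$. Then there exist two ordinary subgraphs $\Delta_1,\Delta_2$ of $T$ with disjoint node sets whose union is the node set of $\Delta$, with the top node $(i_\Delta,j_\Delta)$ belonging to $\Delta_1$, such that $\varepsilon_{i,j}=0$ for all nodes $(i,j)$ of $\Delta_1$, and $\varepsilon_{i,j}=c$ for all nodes $(i,j)$ of $\Delta_2$, for a single constant $c\in\{1,-1\}$.
   Context: Fix $n\ge 1$. Let $T$ be the graph with node set $\{(i,j):0\le i\le n-1,\ 1\le j\le n-i\}$ ("row $i$" consists of the nodes $(i,\cdot)$) in which, for every $1\le i\le n-1$, $1\le j\le n-i$, the node $(i,j)$ is adjacent to $(i-1,j)$ and to $(i-1,j+1)$, and there are no other edges. A subgraph $\Delta\subset T$ is ordinary if it is connected, induced, and whenever it contains both $(i,j)$ and $(i,j+1)$ it also contains $(i-1,j+1)$ and $(i+1,j)$. For ordinary $\Delta$ the smallest-index row meeting $\Delta$ contains exactly one node of $\Delta$, the top node $(i_\Delta,j_\Delta)$. In $\mathbb R^{n(n+1)/2}$ with coordinates $x_{i,j}$ indexed by nodes of $T$, $C_\Delta$ is the set of $x$ with: $x_{i,j}=0$ for $(i,j)\notin\Delta$; $x_{i_\Delta,j_\Delta}=0$; $x_{i-1,j}\ge x_{i,j}$ for every edge of $\Delta$ joining $(i,j)$ and $(i-1,j)$; $x_{i,j}\ge x_{i-1,j+1}$ for every edge of $\Delta$ joining $(i,j)$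 and $(i-1,j+1)$. *)

theory Defs
  imports "HOL-Analysis.Analysis"
begin

type_synonym node = "int \<times> int"

definition T_nodes :: "nat \<Rightarrow> node set" where
  "T_nodes n = {(i,j). 0 \<le> i \<and> i \<le> int n - 1 \<and> 1 \<le> j \<and> j \<le> int n - i}"

definition T_adj :: "nat \<Rightarrow> node \<Rightarrow> node \<Rightarrow> bool" where
  "T_adj n p q \<longleftrightarrow> p \<in> T_nodes n \<and> q \<in> T_nodes n \<and>
     ((fst p \<ge> 1 \<and> fst q = fst p - 1 \<and> (snd q = snd p \<or> snd q = snd p + 1)) \<or>
      (fst q \<ge> 1 \<and> fst p = fst q - 1 \<and> (snd p = snd q \<or> snd p = snd q + 1)))"

definition induced_connected :: "nat \<Rightarrow> node set \<Rightarrow> bool" where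
  "induced_connected n D \<longleftrightarrow> D \<noteq> {} \<and>
     (\<forall>p\<in>D. \<forall>q\<in>D. (p, q) \<in> {(a, b). a \<in> D \<and> b \<in> D \<and> T_adj n a b}\<^sup>*)"

text \<open>Ordinary subgraphs (induced subgraphs are identified with their node sets).\<close>
definition ordinary :: "nat \<Rightarrow> node set \<Rightarrow> bool" where
  "ordinary n D \<longleftrightarrow> D \<subseteq> T_nodes n \<and> induced_connected n D \<and>
     (\<forall>i j. (i, j) \<in> D \<and> (i, j + 1) \<in> D \<longrightarrow> (i - 1, j + 1) \<in> D \<and> (i + 1, j) \<in> D)"

definition top_node :: "node set \<Rightarrow> node" where
  "top_node D = (THE p. p \<in> D \<and> fst p = Min (fst ` D))"

definition cone_C :: "node set \<Rightarrow> (node \<Rightarrow> real) set" where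
  "cone_C D = {x. (\<forall>p. p \<notin> D \<longrightarrow> x p = 0) \<and> x (top_node D) = 0 \<and>
     (\<forall>i j. (i, j) \<in> D \<and> (i - 1, j) \<in> D \<longrightarrow> x (i - 1, j) \<ge> x (i, j)) \<and>
     (\<forall>i j. (i, j) \<in> D \<and> (i - 1, j + 1) \<in> D \<longrightarrow> x (i, j) \<ge> x (i - 1, j + 1))}"

text \<open>Faces of a convex set of vectors (functions), literally as HOL-Analysis face_of.\<close>
definition fface_of :: "(node \<Rightarrow> real) set \<Rightarrow> (node \<Rightarrow> real) set \<Rightarrow> bool" where
  "fface_of F C \<longleftrightarrow> F \<subseteq> C \<and>
     (\<forall>a\<in>F. \<forall>b\<in>F. \<forall>u::real. 0 \<le> u \<and> u \<le> 1 \<longrightarrow> (\<lambda>p. (1 - u) * a p + u * b p) \<in> F) \<and>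
     (\<forall>a\<in>C. \<forall>b\<in>C. \<forall>x\<in>F. a \<noteq> b \<and> (\<exists>u::real. 0 < u \<and> u < 1 \<and> x = (\<lambda>p. (1 - u) * a p + u * b p))
        \<longrightarrow> a \<in> F \<and> b \<in> F)"

definition min_int_edge_dir :: "(node \<Rightarrow> real) set \<Rightarrow> (node \<Rightarrow> real) \<Rightarrow> bool" where
  "min_int_edge_dir C eps \<longleftrightarrow> eps \<noteq> (\<lambda>p. 0) \<and>
     fface_of {x. \<exists>t::real. t \<ge> 0 \<and> x = (\<lambda>p. t * eps p)} C \<and>
     (\<forall>p. eps p \<in> \<int>) \<and>
     (\<forall>t::real. t > 0 \<and> (\<forall>p. t * eps p \<in> \<int>) \<longrightarrow> t \<ge> 1)"

end

theory Submission
  imports Defs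
begin

definition walk :: "nat \<Rightarrow> node set \<Rightarrow> node list \<Rightarrow> bool" where
  "walk n D xs \<longleftrightarrow> xs \<noteq> [] \<and> set xs \<subseteq> D \<and> successively (T_adj n) xs"

lemma rt_walk:
  assumes "(p, q) \<in> {(a, b). a \<in> D \<and> b \<in> D \<and> T_adj n a b}\<^sup>*" "p \<in> D"
  shows "\<exists>xs. walk n D xs \<and> hd xs = p \<and> last xs = q"
  using assms
proof (induction rule: rtrancl_induct)
  case base
  then show ?case by (intro exI[of _ "[p]"]) (auto simp: walk_def)
next
  case (step y z)
  then obtain xs where xs: "walk n D xs" "hd xs = p" "last xs = y" by auto
  show ?case
    using xs step by (intro exI[of _ "xs @ [z]"]) (auto simp: walk_def successively_append_iff)
qed

definition W :: "node list \<Rightarrow> nat" where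
  "W xs = sum_list (map (\<lambda>x. nat (fst x)) xs)"

lemma T_adj_fst: "T_adj n a b \<Longrightarrow> fst b = fst a + 1 \<or> fst b = fst a - 1"
  unfolding T_adj_def by auto

lemma T_nodes_fst: "p \<in> T_nodes n \<Longrightarrow> 0 \<le> fst p"
  unfolding T_nodes_def by auto

lemma T_nodes_finite: "finite (T_nodes n)"
proof -
  have "T_nodes n \<subseteq> {0..int n} \<times> {1..int n}" unfolding T_nodes_def by auto
  then show ?thesis using finite_subset by blast
qed

lemma top_unique_aux:
  assumes ord: "ordinary n D" and L: "\<forall>x\<in>D. L \<le> fst x"
    and p: "p \<in> D" "fst p = L" and q: "q \<in> D" "fst q = L" and pq: "p \<noteq> q"
  shows "\<forall>xs. W xs = w \<longrightarrow> walk n D xs \<longrightarrow> hd xs = p \<longrightarrow> last xs = q \<longrightarrow> False"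
proof (induction w rule: less_induct)
  case (less w)
  have DT: "D \<subseteq> T_nodes n" using ord unfolding ordinary_def by auto
  show ?case
  proof (intro allI impI)
    fix xs assume Wx: "W xs = w" and wk: "walk n D xs" and h: "hd xs = p" and la: "last xs = q"
    have IH: "\<And>ys. W ys < w \<Longrightarrow> walk n D ys \<Longrightarrow> hd ys = p \<Longrightarrow> last ys = q \<Longrightarrow> False"
      using less by blast
    obtain rest where xs: "xs = p # rest" using wk h unfolding walk_def by (cases xs) auto
    have rne: "rest \<noteq> []" using xs la pq by auto
    have adj1: "T_adj n p (hd rest)" using wk xs rne unfolding walk_def by (auto simp: successively_Cons)
    have "hd rest \<in> D" using wk xs rne unfolding walk_def by auto
    then have "fst (hd rest) = L + 1" using T_adj_fst[OF adj1] L p by fastforce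
    define M where "M = Max (fst ` set xs)"
    have fin: "finite (fst ` set xs)" by simp
    have "fst (hd rest) \<in> fst ` set xs" using xs rne by auto
    then have "fst (hd rest) \<le> M" unfolding M_def using Max_ge[OF fin] by blast
    then have HML: "L + 1 \<le> M" using \<open>fst (hd rest) = L + 1\<close> by simp
    have "M \<in> fst ` set xs" unfolding M_def using xs by (intro Max_in) auto
    then obtain v where v: "v \<in> set xs" "fst v = M" by auto
    have Mge: "\<And>x. x \<in> set xs \<Longrightarrow> fst x \<le> M" unfolding M_def using Max_ge[OF fin] by auto
    obtain as bs where sp: "xs = as @ v # bs" using split_list[OF v(1)] by auto
    have asne: "as \<noteq> []" using sp xs v HML p by (cases as) auto
    have bsne: "bs \<noteq> []" using sp la v HML q by (cases bs) auto
    define u where "u = last as"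
    define w' where "w' = hd bs"
    have succ: "successively (T_adj n) xs" "set xs \<subseteq> D" using wk unfolding walk_def by auto
    have adj_uv: "T_adj n u v" using succ asne bsne unfolding sp u_def
      by (auto simp: successively_append_iff successively_Cons)
    have adj_vw: "T_adj n v w'" using succ asne bsne unfolding sp w'_def
      by (auto simp: successively_append_iff successively_Cons)
    have uin: "u \<in> set xs" "w' \<in> set xs" using asne bsne unfolding sp u_def w'_def by auto
    have uD: "u \<in> D" "w' \<in> D" "v \<in> D" using uin v succ by auto
    obtain j where vj: "v = (M, j)" using v(2) by (metis prod.collapse)
    have u_form: "u = (M - 1, j) \<or> u = (M - 1, j + 1)"
      using adj_uv Mge[OF uin(1)] vj unfolding T_adj_def by (cases u) auto
    have w_form: "w' = (M - 1, j) \<or> w' = (M - 1, j + 1)"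
      using adj_vw Mge[OF uin(2)] vj unfolding T_adj_def by (cases w') auto
    have L0: "0 \<le> L" using DT p T_nodes_fst[of p n] by auto
    show False
    proof (cases "u = w'")
      case True
      define ys where "ys = as @ tl bs"
      have "W xs = W ys + nat (fst v) + nat (fst w')"
        unfolding ys_def sp W_def w'_def using bsne by (cases bs) auto
      moreover have "0 < nat (fst v)" using v HML L0 by auto
      ultimately have "W ys < w" using Wx by auto
      moreover have "walk n D ys"
      proof -
        have "successively (T_adj n) as" "successively (T_adj n) bs"
          using succ(1) unfolding sp by (auto simp: successively_append_iff successively_Cons)
        moreover have "tl bs \<noteq> [] \<Longrightarrow> T_adj n w' (hd (tl bs))"
          using \<open>successively (T_adj n) bs\<close> bsne unfolding w'_def
          by (cases bs) (auto simp: successively_Cons)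
        moreover have "successively (T_adj n) (tl bs)"
          using \<open>successively (T_adj n) bs\<close> by (cases bs) (auto simp: successively_Cons)
        moreover have "set (tl bs) \<subseteq> set bs" by (cases bs) auto
        ultimately show ?thesis using succ(2) asne True unfolding walk_def ys_def sp u_def
          by (auto simp: successively_append_iff)
      qed
      moreover have "hd ys = p" using h asne unfolding ys_def sp by auto
      moreover have "last ys = q"
      proof (cases "tl bs = []")
        case True
        then have "bs = [w']" using bsne unfolding w'_def by (cases bs) auto
        then show ?thesis using la \<open>u = w'\<close> asne unfolding ys_def sp u_def by auto
      next
        case False
        then show ?thesis using la bsne unfolding ys_def sp by (cases bs) auto
      qed
      ultimately show False using IH by blast
    next
      case False
      then have uw: "{u, w'} = {(M - 1, j), (M - 1, j + 1)}" using u_form w_form by auto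
      have "(M - 1, j) \<in> D" "(M - 1, j + 1) \<in> D" using uw uD by auto
      then have "(M - 1 - 1, j + 1) \<in> D" using ord unfolding ordinary_def by blast
      then have v'D: "(M - 2, j + 1) \<in> D" by simp
      define v' where "v' = (M - 2, j + 1)"
      have "L \<le> M - 2" using L v'D by auto
      have T1: "(M - 1, j) \<in> T_nodes n" "(M - 1, j + 1) \<in> T_nodes n" "v' \<in> T_nodes n"
        using \<open>(M - 1, j) \<in> D\<close> \<open>(M - 1, j + 1) \<in> D\<close> v'D DT unfolding v'_def by auto
      have a1: "T_adj n x v'" if "x = (M - 1, j) \<or> x = (M - 1, j + 1)" for x
        using that T1 \<open>L \<le> M - 2\<close> L0 unfolding T_adj_def v'_def by auto
      have a2: "T_adj n v' x" if "x = (M - 1, j) \<or> x = (M - 1, j + 1)" for x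
        using that T1 \<open>L \<le> M - 2\<close> L0 unfolding T_adj_def v'_def by auto
      define ys where "ys = as @ v' # bs"
      have "W xs = W ys + 2"
        unfolding ys_def sp W_def v'_def using vj \<open>L \<le> M - 2\<close> L0 by auto
      then have "W ys < w" using Wx by auto
      moreover have "walk n D ys"
      proof -
        have "successively (T_adj n) as" "successively (T_adj n) bs"
          using succ(1) unfolding sp by (auto simp: successively_append_iff successively_Cons)
        then show ?thesis using succ(2) asne bsne a1[OF u_form] a2[OF w_form] v'D
          unfolding walk_def ys_def sp u_def w'_def v'_def
          by (auto simp: successively_append_iff successively_Cons)
      qed
      moreover have "hd ys = p" using h asne unfolding ys_def sp by auto
      moreover have "last ys = q" using la bsne unfolding ys_def sp by auto
      ultimately show False using IH by blast
    qed
  qed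
qed

lemma top_node_in:
  assumes ord: "ordinary n D"
  shows "top_node D \<in> D \<and> fst (top_node D) = Min (fst ` D)"
proof -
  have DT: "D \<subseteq> T_nodes n" and ne: "D \<noteq> {}" and conn: "induced_connected n D"
    using ord unfolding ordinary_def induced_connected_def by auto
  have fin: "finite D" using DT T_nodes_finite finite_subset by blast
  define L where "L = Min (fst ` D)"
  have "L \<in> fst ` D" unfolding L_def using fin ne by (intro Min_in) auto
  then obtain p where p: "p \<in> D" "fst p = L" by auto
  have Lle: "\<forall>x\<in>D. L \<le> fst x"
  proof
    fix x assume "x \<in> D"
    then have "fst x \<in> fst ` D" by simp
    then show "L \<le> fst x" unfolding L_def using Min_le[OF finite_imageI[OF fin]] by blast
  qed
  have uniq: "x = p" if x: "x \<in> D" "fst x = L" for x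
  proof (rule ccontr)
    assume "x \<noteq> p"
    then have px: "p \<noteq> x" by simp
    have "(p, x) \<in> {(a, b). a \<in> D \<and> b \<in> D \<and> T_adj n a b}\<^sup>*"
      using conn p x unfolding induced_connected_def by blast
    then obtain xs where xs: "walk n D xs" "hd xs = p" "last xs = x" using rt_walk p(1) by blast
    have "\<forall>ys. W ys = W xs \<longrightarrow> walk n D ys \<longrightarrow> hd ys = p \<longrightarrow> last ys = x \<longrightarrow> False"
      by (rule top_unique_aux[OF ord Lle p x px])
    then show False using xs by blast
  qed
  have "top_node D = p" unfolding top_node_def L_def[symmetric]
  proof (rule the_equality)
    show "p \<in> D \<and> fst p = L" using p by simp
    show "\<And>x. x \<in> D \<and> fst x = L \<Longrightarrow> x = p" using uniq by blast
  qed
  then show ?thesis using p L_def by simp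
qed


lemma T_adj_sym: "T_adj n a b \<Longrightarrow> T_adj n b a"
  unfolding T_adj_def by auto

lemma T_adj_up1: "(i, j) \<in> T_nodes n \<Longrightarrow> (i - 1, j) \<in> T_nodes n \<Longrightarrow> T_adj n (i, j) (i - 1, j)"
  unfolding T_adj_def T_nodes_def by auto

lemma T_adj_up2: "(i, j) \<in> T_nodes n \<Longrightarrow> (i - 1, j + 1) \<in> T_nodes n \<Longrightarrow> T_adj n (i, j) (i - 1, j + 1)"
  unfolding T_adj_def T_nodes_def by auto

theorem mainTheorem6:
  fixes n :: nat and D :: "node set" and eps :: "node \<Rightarrow> real"
  assumes "n \<ge> 1"
    and "ordinary n D"
    and "min_int_edge_dir (cone_C D) eps"
  shows "\<exists>D1 D2. ordinary n D1 \<and> ordinary n D2 \<and> D1 \<inter> D2 = {} \<and> D1 \<union> D2 = D \<and>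
           top_node D \<in> D1 \<and>
           (\<exists>c::real. c \<in> {1, -1} \<and> (\<forall>p\<in>D1. eps p = 0) \<and> (\<forall>p\<in>D2. eps p = c))"
proof -
  define R where "R = {x. \<exists>t::real. t \<ge> 0 \<and> x = (\<lambda>p. t * eps p)}"
  have eps_ne: "eps \<noteq> (\<lambda>p. 0)" and face: "fface_of R (cone_C D)"
    and int: "\<forall>p. eps p \<in> \<int>"
    and minim: "\<forall>t::real. t > 0 \<and> (\<forall>p. t * eps p \<in> \<int>) \<longrightarrow> t \<ge> 1"
    using assms(3) unfolding min_int_edge_dir_def R_def by auto
  have epsR: "eps \<in> R" unfolding R_def by (intro CollectI exI[of _ 1]) auto
  have epsC: "eps \<in> cone_C D" using face epsR unfolding fface_of_def by auto
  have ord: "ordinary n D" by fact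
  have DT: "D \<subseteq> T_nodes n" using ord unfolding ordinary_def by auto
  have fin: "finite D" using DT T_nodes_finite finite_subset by blast
  have clos: "\<And>i j. (i, j) \<in> D \<Longrightarrow> (i, j + 1) \<in> D \<Longrightarrow> (i - 1, j + 1) \<in> D \<and> (i + 1, j) \<in> D"
    using ord unfolding ordinary_def by blast
  have eps_off: "\<And>p. p \<notin> D \<Longrightarrow> eps p = 0" and eps_top: "eps (top_node D) = 0"
    and ineq1: "\<And>i j. (i, j) \<in> D \<Longrightarrow> (i - 1, j) \<in> D \<Longrightarrow> eps (i - 1, j) \<ge> eps (i, j)"
    and ineq2: "\<And>i j. (i, j) \<in> D \<Longrightarrow> (i - 1, j + 1) \<in> D \<Longrightarrow> eps (i, j) \<ge> eps (i - 1, j + 1)"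
    using epsC unfolding cone_C_def by auto
  have topD: "top_node D \<in> D" using top_node_in[OF ord] by blast
  define E where "E = {(a, b). a \<in> D \<and> b \<in> D \<and> T_adj n a b \<and> eps a = eps b}"
  have Esym: "(b, a) \<in> E" if "(a, b) \<in> E" for a b
    using that T_adj_sym unfolding E_def by auto
  have Estar: "b \<in> D \<and> eps b = eps a" if "(a, b) \<in> E\<^sup>*" "a \<in> D" for a b
    using that by (induction rule: rtrancl_induct) (auto simp: E_def)
  have Estar_sym: "(b, a) \<in> E\<^sup>*" if "(a, b) \<in> E\<^sup>*" for a b
    using that
  proof (induction rule: rtrancl_induct)
    case base then show ?case by simp
  next
    case (step y z)
    then show ?case using Esym converse_rtrancl_into_rtrancl by metis
  qed
  have lift: "(x, y) \<in> {(a, b). a \<in> S \<and> b \<in> S \<and> T_adj n a b}\<^sup>*"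
    if "(x, y) \<in> E\<^sup>*" "x \<in> S" "\<forall>a b. a \<in> S \<longrightarrow> (a, b) \<in> E \<longrightarrow> b \<in> S" for x y S
    using that
  proof (induction rule: rtrancl_induct)
    case base then show ?case by simp
  next
    case (step y z)
    have "(x, y) \<in> {(a, b). a \<in> S \<and> b \<in> S \<and> T_adj n a b}\<^sup>*" using step by blast
    moreover have "y \<in> S"
    proof -
      have "\<And>y. (x, y) \<in> E\<^sup>* \<Longrightarrow> y \<in> S"
      proof -
        fix y assume "(x, y) \<in> E\<^sup>*"
        then show "y \<in> S" by (induction rule: rtrancl_induct) (use step.prems in blast)+
      qed
      then show ?thesis using step.hyps(1) by blast
    qed
    moreover have "z \<in> S" using \<open>y \<in> S\<close> step.hyps(2) step.prems(2) by blast
    moreover have "T_adj n y z" using step.hyps(2) unfolding E_def by auto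
    ultimately show ?case by (simp add: rtrancl_into_rtrancl)
  qed
  have perturb: "\<exists>c. \<forall>p. eps p = (if p \<in> S then c else 0)"
    if S: "S \<subseteq> D" "top_node D \<notin> S" "S \<noteq> {}" "\<forall>a b. (a, b) \<in> E \<longrightarrow> (a \<in> S \<longleftrightarrow> b \<in> S)" for S
  proof -
    define Dif where "Dif = (\<lambda>(a, b). \<bar>eps a - eps b\<bar>) ` {(a, b). a \<in> D \<and> b \<in> D \<and> eps a \<noteq> eps b}"
    have finDif: "finite Dif" unfolding Dif_def
      by (rule finite_imageI, rule finite_subset[of _ "D \<times> D"]) (use fin in auto)
    define \<delta> where "\<delta> = (if Dif = {} then 1 else Min Dif / 2)"
    have dpos: "\<delta> > 0"
    proof (cases "Dif = {}")
      case False
      have "Min Dif \<in> Dif" using False finDif by (intro Min_in) auto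
      then have "Min Dif > 0" unfolding Dif_def by auto
      then show ?thesis using False unfolding \<delta>_def by simp
    qed (simp add: \<delta>_def)
    have gap: "2 * \<delta> \<le> \<bar>eps a - eps b\<bar>" if "a \<in> D" "b \<in> D" "eps a \<noteq> eps b" for a b
    proof -
      have inD: "\<bar>eps a - eps b\<bar> \<in> Dif" unfolding Dif_def using that by force
      then have "Dif \<noteq> {}" by auto
      then show ?thesis unfolding \<delta>_def using Min_le[OF finDif inD] by simp
    qed
    define z where "z = (\<lambda>p. if p \<in> S then \<delta> else 0)"
    define a where "a = (\<lambda>p. eps p + z p)"
    define b where "b = (\<lambda>p. eps p - z p)"
    have shift: "a u \<le> a v \<and> b u \<le> b v" if "u \<in> D" "v \<in> D" "T_adj n u v" "eps u \<le> eps v" for u v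
    proof (cases "eps u = eps v")
      case True
      then have "(u, v) \<in> E" unfolding E_def using that by auto
      then have "u \<in> S \<longleftrightarrow> v \<in> S" using S(4) by blast
      then have "z u = z v" unfolding z_def by simp
      then show ?thesis unfolding a_def b_def using that by auto
    next
      case False
      then have "2 * \<delta> \<le> eps v - eps u" using gap[OF that(1,2) False] that(4) by auto
      moreover have "0 \<le> z u" "z u \<le> \<delta>" "0 \<le> z v" "z v \<le> \<delta>" unfolding z_def using dpos by auto
      ultimately show ?thesis unfolding a_def b_def by auto
    qed
    have zoff: "z p = 0" if "p \<notin> D" for p using that S(1) unfolding z_def by auto
    have ztop: "z (top_node D) = 0" using S(2) unfolding z_def by auto
    have aC: "a \<in> cone_C D" and bC: "b \<in> cone_C D"
    proof -
      have i1: "(i - 1, j) \<in> D \<Longrightarrow> (i, j) \<in> D \<Longrightarrow> a (i, j) \<le> a (i - 1, j) \<and> b (i, j) \<le> b (i - 1, j)" for i j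
        using shift[of "(i, j)" "(i - 1, j)"] ineq1[of i j] T_adj_up1[of i j n] DT by auto
      have i2: "(i - 1, j + 1) \<in> D \<Longrightarrow> (i, j) \<in> D \<Longrightarrow> a (i - 1, j + 1) \<le> a (i, j) \<and> b (i - 1, j + 1) \<le> b (i, j)" for i j
        using shift[of "(i - 1, j + 1)" "(i, j)"] ineq2[of i j] T_adj_up2[of i j n] T_adj_sym DT by blast
      show "a \<in> cone_C D" unfolding cone_C_def using i1 i2 eps_off zoff eps_top ztop
        by (auto simp: a_def)
      show "b \<in> cone_C D" unfolding cone_C_def using i1 i2 eps_off zoff eps_top ztop
        by (auto simp: b_def)
    qed
    obtain s where s: "s \<in> S" using S(3) by auto
    have "a s \<noteq> b s" unfolding a_def b_def z_def using s dpos by auto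
    then have ab: "a \<noteq> b" by auto
    have mid: "eps = (\<lambda>p. (1 - 1/2) * a p + (1/2) * b p)" unfolding a_def b_def
      by (rule ext) (simp add: field_simps)
    have mid2: "\<exists>u::real. 0 < u \<and> u < 1 \<and> eps = (\<lambda>p. (1 - u) * a p + u * b p)"
      using mid by (intro exI[of _ "1/2"]) simp
    have F3: "\<forall>a\<in>cone_C D. \<forall>b\<in>cone_C D. \<forall>x\<in>R. a \<noteq> b \<and> (\<exists>u::real. 0 < u \<and> u < 1 \<and> x = (\<lambda>p. (1 - u) * a p + u * b p))
        \<longrightarrow> a \<in> R \<and> b \<in> R" using face unfolding fface_of_def by blast
    have "a \<in> R" using F3 aC bC epsR ab mid2 by blast
    then obtain t where t: "a = (\<lambda>p. t * eps p)" unfolding R_def by auto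
    have zt: "z p = (t - 1) * eps p" for p
      using fun_cong[OF t, of p] unfolding a_def by (simp add: algebra_simps)
    have "t \<noteq> 1" using zt[of s] s dpos unfolding z_def by auto
    then have "eps p = (if p \<in> S then \<delta> / (t - 1) else 0)" for p
      using zt[of p] unfolding z_def by (auto simp: field_simps split: if_splits)
    then show ?thesis by blast
  qed
  obtain p0 where p0: "eps p0 \<noteq> 0" using eps_ne by (metis ext)
  have p0D: "p0 \<in> D" using p0 eps_off by metis
  define K where "K = {q. (p0, q) \<in> E\<^sup>*}"
  have Keps': "q \<in> D \<and> eps q = eps p0" if "q \<in> K" for q
    using Estar[of p0 q] p0D that unfolding K_def by simp
  have KD: "K \<subseteq> D" using Keps' by blast
  have Keps: "\<And>q. q \<in> K \<Longrightarrow> eps q = eps p0" using Keps' by blast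
  have topK: "top_node D \<notin> K" using Keps eps_top p0 by metis
  have Kne: "K \<noteq> {}" unfolding K_def by blast
  have Kcl: "\<forall>a b. (a, b) \<in> E \<longrightarrow> (a \<in> K \<longleftrightarrow> b \<in> K)"
    proof (intro allI impI)
      fix a b assume ab: "(a, b) \<in> E"
      then have ba: "(b, a) \<in> E" by (rule Esym)
      show "a \<in> K \<longleftrightarrow> b \<in> K" unfolding K_def
        using rtrancl_into_rtrancl[OF _ ab] rtrancl_into_rtrancl[OF _ ba] by blast
    qed
  obtain c where c: "\<And>p. eps p = (if p \<in> K then c else 0)" using perturb[OF KD topK Kne Kcl] by blast
  have cp0: "c = eps p0" using c[of p0] p0 by (auto split: if_splits)
  have c0: "c \<noteq> 0" using cp0 p0 by simp
  have cint: "c \<in> \<int>" using cp0 int by metis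
  have c1: "c \<in> {1, -1}"
  proof (cases "c > 0")
    case True
    have "\<forall>p. (1 / c) * eps p \<in> \<int>" using c True by auto
    then have "1 / c \<ge> 1" using minim True by auto
    then have "c \<le> 1" using True by (simp add: le_divide_eq)
    moreover obtain k :: int where "c = of_int k" using cint Ints_cases by blast
    ultimately show ?thesis using True by auto
  next
    case False
    then have neg: "c < 0" using c0 by auto
    have "\<forall>p. (- 1 / c) * eps p \<in> \<int>" using c neg by auto
    moreover have "- 1 / c > 0" using neg by simp
    ultimately have "- 1 / c \<ge> 1" using minim by blast
    then have "c \<ge> -1" using neg by (auto simp: divide_le_eq le_divide_eq)
    moreover obtain k :: int where "c = of_int k" using cint Ints_cases by blast
    ultimately show ?thesis using neg by auto
  qed
  define D1 where "D1 = {p \<in> D. eps p = 0}"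
  define D2 where "D2 = {p \<in> D. eps p = c}"
  have D2K: "D2 = K"
  proof
    show "D2 \<subseteq> K"
    proof
      fix p assume "p \<in> D2"
      then have "eps p = c" unfolding D2_def by blast
      then show "p \<in> K" using c[of p] c0 by metis
    qed
    show "K \<subseteq> D2"
    proof
      fix p assume p: "p \<in> K"
      then have "eps p = c" using c[of p] by simp
      then show "p \<in> D2" using p KD unfolding D2_def by blast
    qed
  qed
  have D1top: "(top_node D, p) \<in> E\<^sup>*" if "p \<in> D1" for p
  proof (rule ccontr)
    assume nt: "(top_node D, p) \<notin> E\<^sup>*"
    define S where "S = {q. (p, q) \<in> E\<^sup>*}"
    have pD: "p \<in> D" "eps p = 0" using that unfolding D1_def by auto
    have Seps': "q \<in> D \<and> eps q = 0" if "q \<in> S" for q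
      using Estar[of p q] pD that unfolding S_def by simp
    have SD: "S \<subseteq> D" using Seps' by blast
    have Seps: "\<And>q. q \<in> S \<Longrightarrow> eps q = 0" using Seps' by blast
    have topS: "top_node D \<notin> S" using nt Estar_sym unfolding S_def by blast
    have Sne: "S \<noteq> {}" unfolding S_def by blast
    have Scl: "\<forall>a b. (a, b) \<in> E \<longrightarrow> (a \<in> S \<longleftrightarrow> b \<in> S)"
      proof (intro allI impI)
        fix a b assume ab: "(a, b) \<in> E"
        then have ba: "(b, a) \<in> E" by (rule Esym)
        show "a \<in> S \<longleftrightarrow> b \<in> S" unfolding S_def
          using rtrancl_into_rtrancl[OF _ ab] rtrancl_into_rtrancl[OF _ ba] by blast
      qed
    obtain c2 where c2: "\<And>q. eps q = (if q \<in> S then c2 else 0)"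
      using perturb[OF SD topS Sne Scl] by blast
    show False using c2[of p0] Seps[of p0] p0 by (auto split: if_splits)
  qed
  have D1cl: "\<forall>a b. a \<in> D1 \<longrightarrow> (a, b) \<in> E \<longrightarrow> b \<in> D1" unfolding D1_def E_def by auto
  have D2cl: "\<forall>a b. a \<in> D2 \<longrightarrow> (a, b) \<in> E \<longrightarrow> b \<in> D2" unfolding D2_def E_def by auto
  have topD1: "top_node D \<in> D1" unfolding D1_def using topD eps_top by auto
  have squeeze: "(i - 1, j + 1) \<in> D \<and> (i + 1, j) \<in> D \<and>
      eps (i, j + 1) \<le> eps (i - 1, j + 1) \<and> eps (i - 1, j + 1) \<le> eps (i, j) \<and>
      eps (i, j + 1) \<le> eps (i + 1, j) \<and> eps (i + 1, j) \<le> eps (i, j)"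
    if "(i, j) \<in> D" "(i, j + 1) \<in> D" for i j
  proof -
    have m: "(i - 1, j + 1) \<in> D" "(i + 1, j) \<in> D" using clos[OF that] by auto
    have "eps (i, j + 1) \<le> eps (i - 1, j + 1)" using ineq1[of i "j + 1"] that m by simp
    moreover have "eps (i - 1, j + 1) \<le> eps (i, j)" using ineq2[of i j] that m by simp
    moreover have "eps (i, j) \<ge> eps (i + 1, j)" using ineq1[of "i + 1" j] that m by simp
    moreover have "eps (i + 1, j) \<ge> eps (i, j + 1)" using ineq2[of "i + 1" j] that m by simp
    ultimately show ?thesis using m by simp
  qed
  have ordD1: "ordinary n D1"
  proof -
    have sub: "D1 \<subseteq> T_nodes n" using DT unfolding D1_def by auto
    have ne: "D1 \<noteq> {}" using topD1 by auto
    have conn: "\<forall>p\<in>D1. \<forall>q\<in>D1. (p, q) \<in> {(a, b). a \<in> D1 \<and> b \<in> D1 \<and> T_adj n a b}\<^sup>*"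
    proof (intro ballI)
      fix p q assume pq: "p \<in> D1" "q \<in> D1"
      then have "(p, q) \<in> E\<^sup>*" using D1top Estar_sym rtrancl_trans by metis
      then show "(p, q) \<in> {(a, b). a \<in> D1 \<and> b \<in> D1 \<and> T_adj n a b}\<^sup>*"
        using lift pq(1) D1cl by blast
    qed
    have cl: "\<forall>i j. (i, j) \<in> D1 \<and> (i, j + 1) \<in> D1 \<longrightarrow> (i - 1, j + 1) \<in> D1 \<and> (i + 1, j) \<in> D1"
    proof (intro allI impI)
      fix i j assume "(i, j) \<in> D1 \<and> (i, j + 1) \<in> D1"
      then show "(i - 1, j + 1) \<in> D1 \<and> (i + 1, j) \<in> D1"
        using squeeze[of i j] unfolding D1_def by auto
    qed
    show ?thesis unfolding ordinary_def induced_connected_def using sub ne conn cl by blast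
  qed
  have ordD2: "ordinary n D2"
  proof -
    have sub: "D2 \<subseteq> T_nodes n" using DT unfolding D2_def by auto
    have ne: "D2 \<noteq> {}" using Kne D2K by auto
    have conn: "\<forall>p\<in>D2. \<forall>q\<in>D2. (p, q) \<in> {(a, b). a \<in> D2 \<and> b \<in> D2 \<and> T_adj n a b}\<^sup>*"
    proof (intro ballI)
      fix p q assume pq: "p \<in> D2" "q \<in> D2"
      have pq0: "(p0, p) \<in> E\<^sup>*" "(p0, q) \<in> E\<^sup>*" using pq D2K unfolding K_def by auto
      have "(p, q) \<in> E\<^sup>*" by (rule rtrancl_trans[OF Estar_sym[OF pq0(1)] pq0(2)])
      then show "(p, q) \<in> {(a, b). a \<in> D2 \<and> b \<in> D2 \<and> T_adj n a b}\<^sup>*"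
        using lift pq(1) D2cl by blast
    qed
    have cl: "\<forall>i j. (i, j) \<in> D2 \<and> (i, j + 1) \<in> D2 \<longrightarrow> (i - 1, j + 1) \<in> D2 \<and> (i + 1, j) \<in> D2"
    proof (intro allI impI)
      fix i j assume "(i, j) \<in> D2 \<and> (i, j + 1) \<in> D2"
      then show "(i - 1, j + 1) \<in> D2 \<and> (i + 1, j) \<in> D2"
        using squeeze[of i j] unfolding D2_def by auto
    qed
    show ?thesis unfolding ordinary_def induced_connected_def using sub ne conn cl by blast
  qed
  have "D1 \<inter> D2 = {}" unfolding D1_def D2_def using c0 by auto
  moreover have "D1 \<union> D2 = D" unfolding D1_def D2_def using c by auto
  ultimately show ?thesis using ordD1 ordD2 topD1 c1 unfolding D1_def D2_def
    by blast
qed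

end
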